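(* Let $f:[0,\infty)\to[0,\infty)$ be continuously differentiable with $f>0$ on $[t_0,\infty)$ for some $t_0\ge0$ and $f\in C^2([t_0,\infty))$, let $g=\log f$ on $[t_0,\infty)$, and assume condition (H1) of the context. Then $g$ and $g'$ are strictly increasing on $[t_0,\infty)$, $g(t)\to\infty$ and $g'(t)\to\infty$ as $t\to\infty$, and $$\lim_{t\to\infty}\frac{\log g'(t)}{g(t)}=0.$$
   Context: Condition (H1): (i) $g'(t)>0$ and $g''(t)>0$ for all $t\ge t_0$, and there is a pair $(q,p)$ with either $q=1$ and $p\in(0,\infty]$, or $q\in(1,\infty)$ and $p\in(0,\infty)$, such that $\lim_{t\to\infty}\frac{g'(t)^2}{g(t)g''(t)}=q$ and $\lim_{t\to\infty}\frac{tg'(t)}{g(t)}=p$; (ii) if $q=1$, then $tg'(t)/g(t)$ is nondecreasing on $[t_0,\infty)$ and there exist $k\in\mathbb{N}$ and $\hat g\in C^2([t_0,\infty))$ with $f=\exp_k\circ\hat g$ and $\hat g'/\hat g$ nonincreasing on $[t_0,\infty)$ ($\exp_1=\exp$, $\exp_k=\exp_{k-1}\circ\exp$). *)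

theory Defs
  imports "HOL-Analysis.Analysis"
begin

end

theory Submission
  imports Defs
begin

lemma within_to_at:
  fixes F F' :: "real \<Rightarrow> real"
  assumes "\<forall>t\<ge>t0. (F has_real_derivative F' t) (at t within {t0..})" "x > t0"
  shows "(F has_real_derivative F' x) (at x)"
proof -
  have "(F has_real_derivative F' x) (at x within {t0<..})"
  proof (rule DERIV_subset[of _ _ _ "{t0..}"])
    show "(F has_real_derivative F' x) (at x within {t0..})" using assms by simp
    show "{t0<..} \<subseteq> {t0..}" by auto
  qed
  moreover have "at x within {t0<..} = at x"
    by (rule at_within_open) (use assms(2) in auto)
  ultimately show ?thesis by simp
qed

lemma within_cont:
  fixes F F' :: "real \<Rightarrow> real"
  assumes "\<forall>t\<ge>t0. (F has_real_derivative F' t) (at t within {t0..})"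
  shows "continuous_on {t0..} F"
  using assms by (metis DERIV_continuous atLeast_iff continuous_on_eq_continuous_within)

lemma smono:
  fixes F F' :: "real \<Rightarrow> real"
  assumes "\<forall>t\<ge>t0. (F has_real_derivative F' t) (at t within {t0..})"
    "\<forall>t\<ge>t0. F' t > 0"
  shows "strict_mono_on {t0..} F"
proof (rule strict_mono_onI)
  fix a b assume ab: "a \<in> {t0..}" "b \<in> {t0..}" "a < b"
  show "F a < F b"
  proof (rule DERIV_pos_imp_increasing_open[OF ab(3)])
    show "\<And>x. a < x \<Longrightarrow> x < b \<Longrightarrow> \<exists>y. (F has_real_derivative y) (at x) \<and> 0 < y"
    proof -
      fix x assume x0: "a < x" "x < b"
      hence x: "a < x \<and> x < b" by simp
      hence "x > t0" using ab by auto
      thus "\<exists>y. (F has_real_derivative y) (at x) \<and> 0 < y"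
        using within_to_at[OF assms(1) \<open>x > t0\<close>] assms(2) \<open>x > t0\<close> by force
    qed
    show "continuous_on {a..b} F"
      by (rule continuous_on_subset[OF within_cont[OF assms(1)]]) (use ab in auto)
  qed
qed

lemma arA: fixes q G a b Z :: real
  assumes "0<q" "0<G" "0<a" "0<b" "a < Z" "a^2 / (G*b) < 2*q"
  shows "- (b * inverse (a^2)) + (1/(2*q*Z)) * (1/G * a) \<le> 0"
proof -
  have Zp: "Z > 0" using assms by simp
  have 1: "a^2 < 2*q*(G*b)" using assms by (simp add: divide_less_eq mult.commute)
  have 2: "(1/(2*q*Z)) * (1/G * a) = a / (2*q*Z*G)" by simp
  have 3: "a / (2*q*Z*G) \<le> 1 / (2*q*G)"
    using assms Zp by (simp add: divide_simps)
  have 4: "1 / (2*q*G) < b / a^2" using 1 assms by (simp add: divide_simps algebra_simps)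
  have 5: "b * inverse (a^2) = b / a^2" by (simp add: divide_inverse)
  show ?thesis unfolding 5 2 using 3 4 by linarith
qed
lemma arB: fixes q G a b :: real
  assumes "0<q" "0<G" "0<a" "0<b" "q/2 < a^2/(G*b)"
  shows "1/a * b - (2/q)*(1/G*a) \<le> 0"
proof -
  have 1: "q*(G*b) < 2 * a^2" using assms by (simp add: less_divide_eq mult.commute)
  have "b / a \<le> 2 * a / (q * G)" using 1 assms by (simp add: divide_simps power2_eq_square mult.commute mult.left_commute)
  thus ?thesis by simp
qed
theorem lemma2p1:
  fixes f f1 f2 g g1 g2 :: "real \<Rightarrow> real" and t0 :: real
  assumes t0: "t0 \<ge> 0"
    and f_nonneg: "\<forall>t\<ge>0. f t \<ge> 0"
    and f_C1: "\<forall>t\<ge>0. (f has_real_derivative f1 t) (at t within {0..})"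
    and f1_cont: "continuous_on {0..} f1"
    and f_pos: "\<forall>t\<ge>t0. f t > 0"
    and f_C2: "\<forall>t\<ge>t0. (f1 has_real_derivative f2 t) (at t within {t0..})"
    and f2_cont: "continuous_on {t0..} f2"
    and g_def: "\<forall>t\<ge>t0. g t = ln (f t)"
    and g_d1: "\<forall>t\<ge>t0. (g has_real_derivative g1 t) (at t within {t0..})"
    and g_d2: "\<forall>t\<ge>t0. (g1 has_real_derivative g2 t) (at t within {t0..})"
    and H1_pos: "\<forall>t\<ge>t0. g1 t > 0 \<and> g2 t > 0"
    and H1_lim: "\<exists>(q::real) (p::ereal).
        ((\<lambda>t. (g1 t)\<^sup>2 / (g t * g2 t)) \<longlongrightarrow> q) at_top \<and>
        ((\<lambda>t. ereal (t * g1 t / g t)) \<longlongrightarrow> p) at_top \<and>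
        ((q = 1 \<and> 0 < p) \<or> (q > 1 \<and> 0 < p \<and> p < \<infinity>)) \<and>
        (q = 1 \<longrightarrow>
           mono_on {t0..} (\<lambda>t. t * g1 t / g t) \<and>
           (\<exists>k::nat. k \<ge> 1 \<and> (\<exists>h h1 h2 :: real \<Rightarrow> real.
              (\<forall>t\<ge>t0. (h has_real_derivative h1 t) (at t within {t0..})) \<and>
              (\<forall>t\<ge>t0. (h1 has_real_derivative h2 t) (at t within {t0..})) \<and>
              continuous_on {t0..} h2 \<and>
              (\<forall>t\<ge>t0. f t = (exp ^^ k) (h t)) \<and>
              antimono_on {t0..} (\<lambda>t. h1 t / h t))))"
  shows "strict_mono_on {t0..} g \<and> strict_mono_on {t0..} g1 \<and>
         filterlim g at_top at_top \<and> filterlim g1 at_top at_top \<and>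
         ((\<lambda>t. ln (g1 t) / g t) \<longlongrightarrow> 0) at_top"
proof -
  have sg: "strict_mono_on {t0..} g" using smono[OF g_d1] H1_pos by auto
  have sg1: "strict_mono_on {t0..} g1" using smono[OF g_d2] H1_pos by auto
  have dg: "\<And>x. x > t0 \<Longrightarrow> (g has_real_derivative g1 x) (at x)"
    using within_to_at[OF g_d1] by auto
  have dg1: "\<And>x. x > t0 \<Longrightarrow> (g1 has_real_derivative g2 x) (at x)"
    using within_to_at[OF g_d2] by auto
  define a where "a = t0 + 1"
  define c where "c = g1 a"
  have c: "c > 0" using H1_pos a_def c_def by auto
  have g1mono: "\<And>s t. t0 \<le> s \<Longrightarrow> s \<le> t \<Longrightarrow> g1 s \<le> g1 t"
  proof -
    fix s t :: real assume st: "t0 \<le> s" "s \<le> t"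
    show "g1 s \<le> g1 t"
    proof (cases "s = t")
      case False
      hence "s < t" using st by simp
      hence "g1 s < g1 t" using strict_mono_onD[OF sg1, of s t] st by simp
      thus ?thesis by simp
    qed simp
  qed
  have glin: "g t \<ge> g a + c * (t - a)" if "t \<ge> a" for t
  proof -
    have "(\<lambda>t. g t - c * t) a \<le> (\<lambda>t. g t - c * t) t"
    proof (rule DERIV_nonneg_imp_nondecreasing[OF that])
      show "\<And>x. a \<le> x \<Longrightarrow> x \<le> t \<Longrightarrow> \<exists>y. ((\<lambda>t. g t - c * t) has_real_derivative y) (at x) \<and> 0 \<le> y"
      proof -
        fix x assume x0: "a \<le> x" "x \<le> t"
        hence x: "a \<le> x \<and> x \<le> t" by simp
        have "((\<lambda>t. g t - c * t) has_real_derivative g1 x - c * 1) (at x)"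
          using x a_def by (intro derivative_intros dg) auto
        moreover have "g1 x - c * 1 \<ge> 0" using g1mono[of a x] x a_def c_def by auto
        ultimately show "\<exists>y. ((\<lambda>t. g t - c * t) has_real_derivative y) (at x) \<and> 0 \<le> y" by blast
      qed
    qed
    thus ?thesis by (simp add: algebra_simps)
  qed
  have glim: "filterlim g at_top at_top"
    unfolding filterlim_at_top
  proof
    fix Z
    show "eventually (\<lambda>x. Z \<le> g x) at_top"
      unfolding eventually_at_top_linorder
    proof (intro exI allI impI)
      fix t assume t: "max a (a + (Z - g a) / c) \<le> t"
      have "Z - g a \<le> c * (t - a)" using t c by (simp add: field_simps)
      thus "Z \<le> g t" using glin[of t] t by auto
    qed
  qed
  from H1_lim obtain q and p :: ereal where qlim: "((\<lambda>t. (g1 t)\<^sup>2 / (g t * g2 t)) \<longlongrightarrow> q) at_top"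
    and qp: "(q = 1 \<and> 0 < p) \<or> (q > 1 \<and> 0 < p \<and> p < \<infinity>)" by blast
  have q: "q > 0" using qp by auto
  have e1: "eventually (\<lambda>t. q/2 < (g1 t)\<^sup>2 / (g t * g2 t)) at_top"
    using order_tendstoD(1)[OF qlim, of "q/2"] q by simp
  have e2: "eventually (\<lambda>t. (g1 t)\<^sup>2 / (g t * g2 t) < 2*q) at_top"
    using order_tendstoD(2)[OF qlim, of "2*q"] q by simp
  have e3: "eventually (\<lambda>t. 1 \<le> g t) at_top"
    using glim unfolding filterlim_at_top by blast
  have ev: "eventually (\<lambda>t. q/2 < (g1 t)\<^sup>2 / (g t * g2 t) \<and> (g1 t)\<^sup>2 / (g t * g2 t) < 2*q \<and> 1 \<le> g t) at_top"
    by (intro eventually_conj e1 e2 e3)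
  then obtain T0 where T0: "\<And>t. t \<ge> T0 \<Longrightarrow> q/2 < (g1 t)\<^sup>2 / (g t * g2 t) \<and> (g1 t)\<^sup>2 / (g t * g2 t) < 2*q \<and> 1 \<le> g t"
    unfolding eventually_at_top_linorder by blast
  define T where "T = max T0 a"
  have TT: "t \<ge> T \<Longrightarrow> q/2 < (g1 t)\<^sup>2 / (g t * g2 t) \<and> (g1 t)\<^sup>2 / (g t * g2 t) < 2*q \<and> 1 \<le> g t
      \<and> t > t0 \<and> g1 t > 0 \<and> g2 t > 0" for t
    using T0[of t] H1_pos a_def T_def by auto
  have g1lim: "filterlim g1 at_top at_top"
  proof (rule ccontr)
    assume "\<not> ?thesis"
    then obtain Z where Z: "\<not> eventually (\<lambda>x. Z \<le> g1 x) at_top"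
      unfolding filterlim_at_top by blast
    have L: "g1 s < Z" if "s \<ge> t0" for s
    proof (rule ccontr)
      assume "\<not> g1 s < Z"
      hence "eventually (\<lambda>x. Z \<le> g1 x) at_top"
        unfolding eventually_at_top_linorder using g1mono that by (meson not_less order_trans)
      thus False using Z by blast
    qed
    have Zpos: "Z > 0" using L[of t0] H1_pos by auto
    define k where "k = 1 / (2 * q * Z)"
    have kpos: "k > 0" using q Zpos k_def by auto
    define \<psi> where "\<psi> = (\<lambda>t. inverse (g1 t) + k * ln (g t))"
    have psi: "\<psi> t \<le> \<psi> T" if "t \<ge> T" for t
    proof (rule DERIV_nonpos_imp_nonincreasing[OF that])
      show "\<And>x. T \<le> x \<Longrightarrow> x \<le> t \<Longrightarrow> \<exists>y. (\<psi> has_real_derivative y) (at x) \<and> y \<le> 0"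
      proof -
        fix x assume x0: "T \<le> x" "x \<le> t"
        note X = TT[OF x0(1)]
        have d0: "(g has_real_derivative g1 x) (at x)" using dg X by auto
        have d1: "(g1 has_real_derivative g2 x) (at x)" using dg1 X by auto
        have gx: "0 < g x" using X by linarith
        have l0: "((\<lambda>t. ln (g t)) has_real_derivative (1 / g x * g1 x)) (at x)"
          by (rule DERIV_chain2[where f=ln and g=g]) (rule DERIV_ln_divide[OF gx], rule d0)
        have "(\<psi> has_real_derivative (- (g2 x * inverse (g1 x ^ Suc (Suc 0)))) + k * (1 / g x * g1 x)) (at x)"
          unfolding \<psi>_def
          by (intro DERIV_add DERIV_inverse_fun DERIV_cmult l0 d1)
            (use X in auto)
        moreover have "(- (g2 x * inverse (g1 x ^ Suc (Suc 0)))) + k * (1 / g x * g1 x) \<le> 0"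
        proof -
          have e: "g1 x ^ Suc (Suc 0) = (g1 x)^2" by (simp add: power2_eq_square)
          show ?thesis unfolding e k_def
            by (rule arA) (use X q L[of x] gx in auto)
        qed
        ultimately show "\<exists>y. (\<psi> has_real_derivative y) (at x) \<and> y \<le> 0" by blast
      qed
    qed
    have "eventually (\<lambda>t. exp (\<psi> T / k) + 1 \<le> g t) at_top"
      using glim unfolding filterlim_at_top by blast
    then obtain N where N: "\<And>t. t \<ge> N \<Longrightarrow> exp (\<psi> T / k) + 1 \<le> g t"
      unfolding eventually_at_top_linorder by blast
    define t where "t = max N T"
    have t1: "t \<ge> T" and t2: "exp (\<psi> T / k) + 1 \<le> g t" using N[of t] t_def by auto
    have gt: "g t > 0" and g1t: "g1 t > 0" using TT[OF t1] by auto
    have "inverse (g1 t) + k * ln (g t) \<le> \<psi> T" using psi[OF t1] unfolding \<psi>_def by simp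
    moreover have "inverse (g1 t) > 0" using g1t by simp
    ultimately have "k * ln (g t) \<le> \<psi> T" by linarith
    hence "ln (g t) \<le> \<psi> T / k" using kpos by (simp add: pos_le_divide_eq mult.commute)
    hence "exp (ln (g t)) \<le> exp (\<psi> T / k)" by simp
    hence "g t \<le> exp (\<psi> T / k)" using gt by simp
    thus False using t2 by simp
  qed
  define k where "k = 2 / q"
  define \<phi> where "\<phi> = (\<lambda>t. ln (g1 t) - k * ln (g t))"
  have phi: "\<phi> t \<le> \<phi> T" if "t \<ge> T" for t
  proof (rule DERIV_nonpos_imp_nonincreasing[OF that])
    show "\<And>x. T \<le> x \<Longrightarrow> x \<le> t \<Longrightarrow> \<exists>y. (\<phi> has_real_derivative y) (at x) \<and> y \<le> 0"
    proof -
      fix x assume x0: "T \<le> x" "x \<le> t"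
      hence x: "T \<le> x \<and> x \<le> t" by simp
      note X = TT[OF x0(1)]
      have d0: "(g has_real_derivative g1 x) (at x)" using dg X by auto
      have d1: "(g1 has_real_derivative g2 x) (at x)" using dg1 X by auto
      have gx: "0 < g x" using X by linarith
      have g1x: "0 < g1 x" using X by linarith
      have l0: "((\<lambda>t. ln (g t)) has_real_derivative (1 / g x * g1 x)) (at x)"
        by (rule DERIV_chain2[where f=ln and g=g]) (rule DERIV_ln_divide[OF gx], rule d0)
      have l1: "((\<lambda>t. ln (g1 t)) has_real_derivative (1 / g1 x * g2 x)) (at x)"
        by (rule DERIV_chain2[where f=ln and g=g1]) (rule DERIV_ln_divide[OF g1x], rule d1)
      have "(\<phi> has_real_derivative (1 / g1 x * g2 x - k * (1 / g x * g1 x))) (at x)"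
        unfolding \<phi>_def
        by (intro DERIV_diff DERIV_cmult l0 l1)
      moreover have "1 / g1 x * g2 x - k * (1 / g x * g1 x) \<le> 0"
        unfolding k_def by (rule arB) (use X q gx in auto)
      ultimately show "\<exists>y. (\<phi> has_real_derivative y) (at x) \<and> y \<le> 0" by blast
    qed
  qed
  have gat: "filterlim g at_infinity at_top" using glim filterlim_at_top_imp_at_infinity by blast
  have up: "((\<lambda>t. \<phi> T / g t + k * (ln (g t) / g t)) \<longlongrightarrow> 0 + k * 0) at_top"
    by (intro tendsto_intros tendsto_divide_0[OF tendsto_const gat]
        filterlim_compose[OF ln_x_over_x_tendsto_0 glim])
  have lo: "((\<lambda>t. ln (g1 t0) / g t) \<longlongrightarrow> 0) at_top"
    by (rule tendsto_divide_0[OF tendsto_const gat])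
  have lim: "((\<lambda>t. ln (g1 t) / g t) \<longlongrightarrow> 0) at_top"
  proof (rule tendsto_sandwich[OF _ _ lo])
    show "eventually (\<lambda>t. ln (g1 t0) / g t \<le> ln (g1 t) / g t) at_top"
      unfolding eventually_at_top_linorder
    proof (intro exI allI impI)
      fix t assume t: "T \<le> t"
      have "ln (g1 t0) \<le> ln (g1 t)" using g1mono[of t0 t] TT[OF t] H1_pos by auto
      thus "ln (g1 t0) / g t \<le> ln (g1 t) / g t" using TT[OF t] by (simp add: divide_right_mono)
    qed
    show "eventually (\<lambda>t. ln (g1 t) / g t \<le> \<phi> T / g t + k * (ln (g t) / g t)) at_top"
      unfolding eventually_at_top_linorder
    proof (intro exI allI impI)
      fix t assume t: "T \<le> t"
      have "ln (g1 t) \<le> \<phi> T + k * ln (g t)" using phi[OF t] unfolding \<phi>_def by simp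
      hence "ln (g1 t) / g t \<le> (\<phi> T + k * ln (g t)) / g t" using TT[OF t] by (simp add: divide_right_mono)
      thus "ln (g1 t) / g t \<le> \<phi> T / g t + k * (ln (g t) / g t)" by (simp add: add_divide_distrib)
    qed
    show "((\<lambda>t. \<phi> T / g t + k * (ln (g t) / g t)) \<longlongrightarrow> 0) at_top" using up by simp
  qed
  show ?thesis using sg sg1 glim g1lim lim by blast
qed

end
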